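(* Consider the system model in the context with a line-of-sight-only channel $\mathbf{h}_k=\alpha_k\mathbf{a}(\theta_k)$, where $\alpha_k\in\mathbb{C}\setminus\{0\}$ and $\theta_k\in[0,2\pi)$. For $\phi\in[-\pi,\pi)$ let $\gamma(\alpha_k\mathbf{a}(\phi),\mathbf{F}_k,\mathbf{y}_k)$ be the SINR function defined in the context. Then the function $\phi\mapsto\gamma(\alpha_k\mathbf{a}(\phi),\mathbf{F}_k,\mathbf{y}_k)$ attains its maximum over $[-\pi,\pi)$, and every global maximizer $$\phi^\star\in\arg\max_{\phi\in[-\pi,\pi)}\gamma(\alpha_k\mathbf{a}(\phi),\mathbf{F}_k,\mathbf{y}_k)$$ satisfies $\mathbf{a}(\phi^\star)=\mathbf{a}(\theta_k)$.
   Context: Let $N\ge 2$, $p_{\rm t}>0$, $\sigma^2>0$, and fix $k\in\{1,\dots,N\}$. The array response vector is $\mathbf{a}(\theta)=(1,e^{j\pi\sin\theta},\dots,e^{j\pi(N-1)\sin\theta})^{\mathsf T}\in\mathbb{C}^N$. $\mathbf{U}_N$ is the normalized DFT matrix, $\mathbf{U}_N(a,b)=\frac{1}{\sqrt N}e^{-j2\pi(a-1)(b-1)/N}$; $\mathbf{C}_N(i,k)=((i-k)\bmod N)+1$; and for $k'\in\{1,\dots,N\}$, $\mathbf{F}_{k'}$ is the matrix whose $n$-th column $\mathbf{p}_{[n,k']}$ is the $\mathbf{C}_N(n,k')$-th column of $\mathbf{U}_N$. For $n\in\{1,\dots,N\}$, $\mathbf{P}_n$ is the matrix whose $k'$-th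 column is $\mathbf{p}_{[n,k']}$. A symbol vector $\mathbf{s}\in\mathbb{C}^N$ with $\mathbb{E}[\mathbf{s}\mathbf{s}^{\mathsf H}]=\mathbf{I}_N$ is sent with $\mathbf{x}_n=\frac{1}{\sqrt N}\mathbf{P}_n\mathbf{s}$; device $k$ receives $\mathbf{y}_k=(y_{[1,k]},\dots,y_{[N,k]})^{\mathsf T}$ with $y_{[n,k]}=\sqrt{p_{\rm t}}\mathbf{h}_k^{\mathsf H}\mathbf{x}_n+z_{[n,k]}$, so that $\mathbf{y}_k=\sqrt{p_{\rm t}/N}\sum_{k'=1}^N\mathbf{s}(k')\mathbf{F}_{k'}^{\mathsf T}\mathbf{h}_k^{*}+\mathbf{z}_k$, where $\mathbf{z}_k$ is independent of $\mathbf{s}$, zero mean, with $\mathbb{E}[\mathbf{z}_k\mathbf{z}_k^{\mathsf H}]=\sigma^2\mathbf{I}_N$. For a candidate channel $\mathbf{h}\in\mathbb{C}^N$ with all entries nonzero, let $\tilde{\mathbf{h}}=\mathbf{1}_N\oslash(\mathbf{h}^* )$ (entrywise division), $g(\mathbf{h})=\tilde{\mathbf{h}}^{\mathsf T}\mathbf{F}_k^*\mathbf{F}_k^{\mathsf T}\mathbf{h}_k^*$, $v_{k'}(\mathbf{h})=\tilde{\mathbf{h}}^{\mathsf T}\mathbf{F}_k^*\mathbf{F}_{k'}^{\mathsf T}\mathbf{h}_k^*$, so that the combined signal $\tilde{\mathbf{h}}^{\mathsf T}\mathbf{F}_k^*\mathbf{y}_k=P+I$ with $P=\sqrt{p_{\rm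 t}/N}\,\mathbf{s}(k)g(\mathbf{h})$ and $I=\sqrt{p_{\rm t}/N}\sum_{k'\neq k}\mathbf{s}(k')v_{k'}(\mathbf{h})+\tilde{\mathbf{h}}^{\mathsf T}\mathbf{F}_k^*\mathbf{z}_k$. The SINR is $\gamma(\mathbf{h},\mathbf{F}_k,\mathbf{y}_k)=\mathbb{E}[|P|^2]/\mathbb{E}[|I|^2]$, expectations over $\mathbf{s}$ and $\mathbf{z}_k$. *)

theory Defs
  imports "HOL-Probability.Probability"
begin

text \<open>All indices are 0-based: paper index i in {1..N} corresponds to i-1 in {0..<N}.
 Vectors in C^N are functions nat => complex, only entries below N matter.\<close>

definition arr :: "real \<Rightarrow> nat \<Rightarrow> complex" where
  "arr \<theta> n = exp (\<i> * complex_of_real (pi * real n * sin \<theta>))"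

definition dftU :: "nat \<Rightarrow> nat \<Rightarrow> nat \<Rightarrow> complex" where
  "dftU N a b = exp (- \<i> * complex_of_real (2 * pi * real a * real b / real N))
                 / complex_of_real (sqrt (real N))"

text \<open>C_N(i,k) - 1 in 0-based form: (i - k) mod N.\<close>
definition Cidx :: "nat \<Rightarrow> nat \<Rightarrow> nat \<Rightarrow> nat" where
  "Cidx N i k = nat ((int i - int k) mod int N)"

definition Fmat :: "nat \<Rightarrow> nat \<Rightarrow> nat \<Rightarrow> nat \<Rightarrow> complex" where
  "Fmat N k' a n = dftU N a (Cidx N n k')"

definition htil :: "(nat \<Rightarrow> complex) \<Rightarrow> nat \<Rightarrow> complex" where
  "htil h m = 1 / cnj (h m)"

text \<open>htilde^T F_k^* F_{k'}^T h_k^*; g(h) = comb with k' = k, v_{k'}(h) = comb with k'.\<close>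
definition comb :: "nat \<Rightarrow> nat \<Rightarrow> nat \<Rightarrow> (nat \<Rightarrow> complex) \<Rightarrow> (nat \<Rightarrow> complex) \<Rightarrow> complex" where
  "comb N k k' h hk =
     (\<Sum>m<N. htil h m * (\<Sum>n<N. cnj (Fmat N k m n) * (\<Sum>a<N. Fmat N k' a n * cnj (hk a))))"

definition gfun :: "nat \<Rightarrow> nat \<Rightarrow> (nat \<Rightarrow> complex) \<Rightarrow> (nat \<Rightarrow> complex) \<Rightarrow> complex" where
  "gfun N k h hk = comb N k k h hk"

definition vfun :: "nat \<Rightarrow> nat \<Rightarrow> nat \<Rightarrow> (nat \<Rightarrow> complex) \<Rightarrow> (nat \<Rightarrow> complex) \<Rightarrow> complex" where
  "vfun N k k' h hk = comb N k k' h hk"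

text \<open>Desired-signal term P and interference-plus-noise term I (random variables on the
 sample space), for candidate channel h, true channel hk, symbols s and noise z.\<close>
definition Psig :: "nat \<Rightarrow> real \<Rightarrow> nat \<Rightarrow> (nat \<Rightarrow> complex) \<Rightarrow> (nat \<Rightarrow> complex)
    \<Rightarrow> (nat \<Rightarrow> 'a \<Rightarrow> complex) \<Rightarrow> 'a \<Rightarrow> complex" where
  "Psig N pt k h hk s \<omega> = complex_of_real (sqrt (pt / real N)) * s k \<omega> * gfun N k h hk"

definition Iint :: "nat \<Rightarrow> real \<Rightarrow> nat \<Rightarrow> (nat \<Rightarrow> complex) \<Rightarrow> (nat \<Rightarrow> complex)
    \<Rightarrow> (nat \<Rightarrow> 'a \<Rightarrow> complex) \<Rightarrow> (nat \<Rightarrow> 'a \<Rightarrow> complex) \<Rightarrow> 'a \<Rightarrow> complex" where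
  "Iint N pt k h hk s z \<omega> =
     complex_of_real (sqrt (pt / real N)) * (\<Sum>k'\<in>{..<N} - {k}. s k' \<omega> * vfun N k k' h hk)
     + (\<Sum>m<N. htil h m * (\<Sum>n<N. cnj (Fmat N k m n) * z n \<omega>))"

definition sinr :: "'a measure \<Rightarrow> nat \<Rightarrow> real \<Rightarrow> nat \<Rightarrow> (nat \<Rightarrow> complex) \<Rightarrow> (nat \<Rightarrow> complex)
    \<Rightarrow> (nat \<Rightarrow> 'a \<Rightarrow> complex) \<Rightarrow> (nat \<Rightarrow> 'a \<Rightarrow> complex) \<Rightarrow> real" where
  "sinr M N pt k h hk s z =
     (LINT \<omega>|M. (cmod (Psig N pt k h hk s \<omega>))\<^sup>2) / (LINT \<omega>|M. (cmod (Iint N pt k h hk s z \<omega>))\<^sup>2)"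

end

theory Submission
  imports Defs
begin


definition ee :: "nat \<Rightarrow> int \<Rightarrow> complex" where
  "ee N t = exp (complex_of_real (2 * pi * of_int t / real N) * \<i>)"

lemma ee_add: "ee N (s + t) = ee N s * ee N t"
  unfolding ee_def by (simp add: exp_add[symmetric] distrib_left distrib_right add_divide_distrib)

lemma ee_Nmult: "N > 0 \<Longrightarrow> ee N (int N * q) = 1"
proof -
  assume N: "N > 0"
  have "complex_of_real (2 * pi * of_int (int N * q) / real N) * \<i> = complex_of_real (2 * pi * of_int q) * \<i>"
    using N by simp
  moreover have "exp (complex_of_real (2 * pi * of_int q) * \<i>) = 1"
    unfolding exp_eq_1 by (simp add: mult_ac)
  ultimately show ?thesis unfolding ee_def by simp
qed

lemma ee_norm: "cmod (ee N t) = 1"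
  unfolding ee_def by (simp add: norm_exp_i_times)

lemma ee_cnj: "cnj (ee N t) = ee N (- t)"
  unfolding ee_def exp_cnj by simp

lemma ee_mod: assumes "N > 0" shows "ee N (t mod int N) = ee N t"
proof -
  have "t = t mod int N + int N * (t div int N)" by simp
  then have "ee N t = ee N (t mod int N) * ee N (int N * (t div int N))"
    by (metis ee_add)
  then show ?thesis using ee_Nmult[OF assms] by simp
qed

lemma ee_pow: "ee N (c * int n) = (ee N c) ^ n"
proof (induction n)
  case 0 then show ?case by (simp add: ee_def)
next
  case (Suc n)
  have "c * int (Suc n) = c * int n + c" by (simp add: algebra_simps)
  then show ?case using Suc by (simp add: ee_add mult.commute)
qed

lemma ee_eq_1: assumes "N > 0" "ee N c = 1" shows "int N dvd c"
proof -
  from assms(2) obtain n :: int where "2 * pi * of_int c / real N = of_int (2 * n) * pi"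
    unfolding ee_def exp_eq_1 by auto
  then have "of_int c = real N * of_int n" using assms(1) by (simp add: field_simps)
  then have "c = int N * n" by (metis of_int_eq_iff of_int_mult of_int_of_nat_eq)
  then show ?thesis by simp
qed

lemma ee_sum: assumes "N > 0"
  shows "(\<Sum>n<N. ee N (c * int n)) = (if int N dvd c then of_nat N else 0)"
proof (cases "int N dvd c")
  case True
  then obtain q where "c = int N * q" by auto
  then have "\<And>n. ee N (c * int n) = 1" using ee_Nmult[OF assms] by (metis mult.assoc)
  then show ?thesis using True by simp
next
  case False
  then have ne: "ee N c \<noteq> 1" using ee_eq_1[OF assms] by blast
  have "ee N c ^ N = 1" using ee_pow[of N c N] ee_Nmult[OF assms, of c] by (simp add: mult.commute)
  then have "(\<Sum>n<N. ee N c ^ n) = 0" using geometric_sum[OF ne, of N] by simp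
  then show ?thesis using False by (simp add: ee_pow)
qed

lemma orth: assumes "m < N" "l < N"
  shows "(\<Sum>n<N. ee N ((int m - int l) * int n)) = (if m = l then of_nat N else 0)"
proof -
  have "int N dvd (int m - int l) \<longleftrightarrow> m = l"
  proof
    assume "int N dvd (int m - int l)"
    then obtain q where q: "int m - int l = int N * q" by auto
    have "q = 0" proof (rule ccontr)
      assume "q \<noteq> 0" then have "1 \<le> \<bar>q\<bar>" by simp
      then have "int N * 1 \<le> int N * \<bar>q\<bar>" by (intro mult_left_mono) auto
      then have "\<bar>int N * q\<bar> \<ge> int N" by (simp add: abs_mult)
      with q assms show False by linarith
    qed
    with q show "m = l" by simp
  qed simp
  then show ?thesis using ee_sum[of N "int m - int l"] assms by simp
qed




lemma dftU_ee: "dftU N a b = ee N (- (int a * int b)) / complex_of_real (sqrt (real N))"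
  unfolding dftU_def ee_def by (simp add: mult_ac)

lemma Fmat_ee: assumes "N > 0"
  shows "Fmat N k' a n = ee N (- (int a * (int n - int k'))) / complex_of_real (sqrt (real N))"
proof -
  have i: "int (Cidx N n k') = (int n - int k') mod int N"
    unfolding Cidx_def using assms by simp
  have "(- (int a * ((int n - int k') mod int N))) mod int N = (- (int a * (int n - int k'))) mod int N"
    by (metis mod_minus_eq mod_mult_right_eq)
  then have "ee N (- (int a * ((int n - int k') mod int N))) = ee N (- (int a * (int n - int k')))"
    by (metis ee_mod[OF assms])
  then show ?thesis unfolding Fmat_def dftU_ee i by simp
qed

lemma sqrtN: "complex_of_real (sqrt (real N)) * complex_of_real (sqrt (real N)) = of_nat N"
  unfolding of_real_mult[symmetric] real_sqrt_mult_self by simp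

lemma Tterm: assumes "N > 0"
  shows "cnj (Fmat N k m n) * (Fmat N k' a n * y) =
         y * ee N (int a * int k' - int m * int k) / of_nat N * ee N ((int m - int a) * int n)"
proof -
  have "cnj (Fmat N k m n) * (Fmat N k' a n * y) =
        y * (ee N (int m * (int n - int k)) * ee N (- (int a * (int n - int k')))) /
           (complex_of_real (sqrt (real N)) * complex_of_real (sqrt (real N)))"
    unfolding Fmat_ee[OF assms] by (simp add: ee_cnj)
  also have "ee N (int m * (int n - int k)) * ee N (- (int a * (int n - int k'))) =
             ee N (int a * int k' - int m * int k) * ee N ((int m - int a) * int n)"
    unfolding ee_add[symmetric] by (simp add: algebra_simps)
  finally show ?thesis unfolding sqrtN by simp
qed

lemma orthX: assumes "m < N" "a < N"
  shows "(\<Sum>n<N. X * ee N ((int m - int a) * int n)) = X * (if m = a then of_nat N else 0)"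
  by (simp only: sum_distrib_left[symmetric] orth[OF assms])

lemma comb_formula: assumes "N > 0"
  shows "comb N k k' h hk = (\<Sum>m<N. htil h m * cnj (hk m) * ee N (int m * (int k' - int k)))"
proof -
  have "comb N k k' h hk = (\<Sum>m<N. \<Sum>n<N. \<Sum>a<N. htil h m * (cnj (Fmat N k m n) * (Fmat N k' a n * cnj (hk a))))"
    unfolding comb_def by (simp add: sum_distrib_left)
  also have "\<dots> = (\<Sum>m<N. \<Sum>a<N. \<Sum>n<N. htil h m * (cnj (hk a) * ee N (int a * int k' - int m * int k) / of_nat N) * ee N ((int m - int a) * int n))"
    by (subst sum.swap) (simp add: Tterm[OF assms] mult.assoc)
  also have "\<dots> = (\<Sum>m<N. \<Sum>a<N. htil h m * (cnj (hk a) * ee N (int a * int k' - int m * int k) / of_nat N) * (if m = a then of_nat N else 0))"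
    by (intro sum.cong refl) (rule orthX, auto)
  also have "\<dots> = (\<Sum>m<N. htil h m * cnj (hk m) * ee N (int m * (int k' - int k)))"
    using assms by (intro sum.cong refl) (simp add: if_distrib algebra_simps cong: if_cong)
  finally show ?thesis .
qed

lemma parseval_gen: assumes "N > 0"
  shows "(\<Sum>n<N. (\<Sum>m<N. b m * ee N (int m * (int n + t))) * cnj (\<Sum>m<N. b m * ee N (int m * (int n + t))))
        = of_nat N * (\<Sum>m<N. b m * cnj (b m))"
proof -
  have e: "ee N (int m * (int n + t)) * ee N (- (int l * (int n + t))) = ee N ((int m - int l) * t) * ee N ((int m - int l) * int n)" for m l n
    unfolding ee_add[symmetric] by (simp add: algebra_simps)
  have "(\<Sum>n<N. (\<Sum>m<N. b m * ee N (int m * (int n + t))) * cnj (\<Sum>m<N. b m * ee N (int m * (int n + t))))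
     = (\<Sum>n<N. \<Sum>l<N. \<Sum>m<N. b m * cnj (b l) * ee N ((int m - int l) * t) * ee N ((int m - int l) * int n))"
    by (simp add: sum_distrib_left sum_distrib_right ee_cnj mult_ac e)
  also have "\<dots> = (\<Sum>l<N. \<Sum>n<N. \<Sum>m<N. b m * cnj (b l) * ee N ((int m - int l) * t) * ee N ((int m - int l) * int n))"
    by (rule sum.swap)
  also have "\<dots> = (\<Sum>l<N. \<Sum>m<N. \<Sum>n<N. b m * cnj (b l) * ee N ((int m - int l) * t) * ee N ((int m - int l) * int n))"
    by (intro sum.cong refl sum.swap)
  also have "\<dots> = (\<Sum>l<N. \<Sum>m<N. b m * cnj (b l) * ee N ((int m - int l) * t) * (if m = l then of_nat N else 0))"
    by (intro sum.cong refl) (rule orthX, auto)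
  also have "\<dots> = of_nat N * (\<Sum>m<N. b m * cnj (b m))"
    by (simp add: if_distrib sum_distrib_left mult_ac ee_def cong: if_cong)
  finally show ?thesis .
qed




lemma meas_cnj[measurable]: "cnj \<in> borel_measurable borel"
  by (intro borel_measurable_continuous_onI continuous_intros)

lemma L2_prod_int:
  fixes f g :: "'a \<Rightarrow> complex"
  assumes "f \<in> borel_measurable M" "g \<in> borel_measurable M"
    "integrable M (\<lambda>\<omega>. (cmod (f \<omega>))\<^sup>2)" "integrable M (\<lambda>\<omega>. (cmod (g \<omega>))\<^sup>2)"
  shows "integrable M (\<lambda>\<omega>. f \<omega> * cnj (g \<omega>))"
proof (rule Bochner_Integration.integrable_bound[where f = "\<lambda>\<omega>. (cmod (f \<omega>))\<^sup>2 + (cmod (g \<omega>))\<^sup>2"])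
  show "integrable M (\<lambda>\<omega>. (cmod (f \<omega>))\<^sup>2 + (cmod (g \<omega>))\<^sup>2)" using assms by auto
  show "(\<lambda>\<omega>. f \<omega> * cnj (g \<omega>)) \<in> borel_measurable M" using assms by measurable
  show "AE x in M. norm (f x * cnj (g x)) \<le> norm ((cmod (f x))\<^sup>2 + (cmod (g x))\<^sup>2)"
  proof (rule AE_I2)
    fix x
    have "2 * cmod (f x) * cmod (g x) \<le> (cmod (f x))\<^sup>2 + (cmod (g x))\<^sup>2" by (rule sum_squares_bound)
    moreover have "0 \<le> cmod (f x) * cmod (g x)" by simp
    moreover have "norm (f x * cnj (g x)) = cmod (f x) * cmod (g x)" by (simp add: norm_mult)
    moreover have "norm ((cmod (f x))\<^sup>2 + (cmod (g x))\<^sup>2) = (cmod (f x))\<^sup>2 + (cmod (g x))\<^sup>2" by simp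
    ultimately show "norm (f x * cnj (g x)) \<le> norm ((cmod (f x))\<^sup>2 + (cmod (g x))\<^sup>2)"
      by linarith
  qed
qed

lemma L2_int:
  fixes f :: "'a \<Rightarrow> complex"
  assumes "prob_space M" "f \<in> borel_measurable M" "integrable M (\<lambda>\<omega>. (cmod (f \<omega>))\<^sup>2)"
  shows "integrable M f"
proof -
  interpret prob_space M by fact
  have "integrable M (\<lambda>\<omega>. f \<omega> * cnj ((\<lambda>_. 1::complex) \<omega>))"
    by (rule L2_prod_int) (use assms in auto)
  then show ?thesis by simp
qed

lemma quad_int:
  fixes W :: "'i \<Rightarrow> 'a \<Rightarrow> complex"
  assumes "finite I" "\<And>i. i \<in> I \<Longrightarrow> W i \<in> borel_measurable M"
    "\<And>i. i \<in> I \<Longrightarrow> integrable M (\<lambda>\<omega>. (cmod (W i \<omega>))\<^sup>2)"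
  shows "complex_of_real (LINT \<omega>|M. (cmod (\<Sum>i\<in>I. a i * W i \<omega>))\<^sup>2) =
         (\<Sum>i\<in>I. \<Sum>j\<in>I. a i * cnj (a j) * (LINT \<omega>|M. W i \<omega> * cnj (W j \<omega>)))"
proof -
  have ij: "integrable M (\<lambda>\<omega>. W i \<omega> * cnj (W j \<omega>))" if "i \<in> I" "j \<in> I" for i j
    using L2_prod_int[of "W i" M "W j"] assms that by auto
  have "complex_of_real (LINT \<omega>|M. (cmod (\<Sum>i\<in>I. a i * W i \<omega>))\<^sup>2) =
        (LINT \<omega>|M. complex_of_real ((cmod (\<Sum>i\<in>I. a i * W i \<omega>))\<^sup>2))" by (simp only: integral_complex_of_real)
  also have "\<dots> = (LINT \<omega>|M. (\<Sum>i\<in>I. \<Sum>j\<in>I. a i * cnj (a j) * (W i \<omega> * cnj (W j \<omega>))))"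
    by (intro Bochner_Integration.integral_cong refl)
       (subst complex_norm_square, simp add: sum_distrib_left sum_distrib_right mult_ac, rule sum.swap)
  also have "\<dots> = (\<Sum>i\<in>I. \<Sum>j\<in>I. a i * cnj (a j) * (LINT \<omega>|M. W i \<omega> * cnj (W j \<omega>)))"
    using ij by (simp add: Bochner_Integration.integral_sum)
  finally show ?thesis .
qed

lemma indep_cross:
  fixes s z :: "nat \<Rightarrow> 'a \<Rightarrow> complex"
  assumes P: "prob_space M" and ij: "i < N" "j < N"
    and meas: "\<forall>i<N. s i \<in> borel_measurable M \<and> z i \<in> borel_measurable M"
    and sq: "\<forall>i<N. integrable M (\<lambda>\<omega>. (cmod (s i \<omega>))\<^sup>2) \<and> integrable M (\<lambda>\<omega>. (cmod (z i \<omega>))\<^sup>2)"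
    and z0: "\<forall>i<N. (LINT \<omega>|M. z i \<omega>) = 0"
    and ind: "prob_space.indep_var M
           (PiM {..<N} (\<lambda>_. borel :: complex measure)) (\<lambda>\<omega>. restrict (\<lambda>i. s i \<omega>) {..<N})
           (PiM {..<N} (\<lambda>_. borel :: complex measure)) (\<lambda>\<omega>. restrict (\<lambda>i. z i \<omega>) {..<N})"
  shows "(LINT \<omega>|M. s i \<omega> * cnj (z j \<omega>)) = 0"
proof -
  interpret prob_space M by fact
  have m1: "(\<lambda>x. x i) \<in> measurable (PiM {..<N} (\<lambda>_. borel :: complex measure)) borel"
    using ij by (intro measurable_component_singleton) auto
  have m2: "(\<lambda>x. cnj (x j)) \<in> measurable (PiM {..<N} (\<lambda>_. borel :: complex measure)) borel"
  proof -
    have "(\<lambda>x. x j) \<in> measurable (PiM {..<N} (\<lambda>_. borel :: complex measure)) borel"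
      using ij by (intro measurable_component_singleton) auto
    from measurable_compose[OF this meas_cnj] show ?thesis .
  qed
  have e1: "((\<lambda>x. x i) \<circ> (\<lambda>\<omega>. restrict (\<lambda>i. s i \<omega>) {..<N})) = s i"
    using ij by (simp add: fun_eq_iff)
  have e2: "((\<lambda>x. cnj (x j)) \<circ> (\<lambda>\<omega>. restrict (\<lambda>i. z i \<omega>) {..<N})) = (\<lambda>\<omega>. cnj (z j \<omega>))"
    using ij by (simp add: fun_eq_iff)
  have ind2: "indep_var borel (s i) borel (\<lambda>\<omega>. cnj (z j \<omega>))"
    using indep_var_compose[OF ind m1 m2] unfolding e1 e2 .
  have int_s: "integrable M (s i)" by (rule L2_int[OF P]) (use meas sq ij in blast)+
  have iz: "integrable M (z j)" by (rule L2_int[OF P]) (use meas sq ij in blast)+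
  then have iz': "integrable M (\<lambda>\<omega>. cnj (z j \<omega>))" by (rule integrable_cnj)
  have "(LINT \<omega>|M. s i \<omega> * cnj (z j \<omega>)) = (LINT \<omega>|M. s i \<omega>) * (LINT \<omega>|M. cnj (z j \<omega>))"
    by (rule indep_var_lebesgue_integral[OF ind2 int_s iz'])
  also have "\<dots> = (LINT \<omega>|M. s i \<omega>) * cnj (LINT \<omega>|M. z j \<omega>)" by simp
  also have "\<dots> = 0" using z0 ij by simp
  finally show ?thesis .
qed




lemma arr_norm: "cmod (arr x n) = 1"
  unfolding arr_def by simp

lemma arr_nz: "arr x n \<noteq> 0"
  using arr_norm[of x n] by auto

definition cc :: "real \<Rightarrow> real \<Rightarrow> nat \<Rightarrow> complex" where
  "cc \<theta> \<phi> m = cnj (arr \<theta> m) / cnj (arr \<phi> m)"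

lemma cc_norm: "cmod (cc \<theta> \<phi> m) = 1"
  unfolding cc_def by (simp add: norm_divide arr_norm)

lemma cc_cnj: "cc \<theta> \<phi> m * cnj (cc \<theta> \<phi> m) = 1"
  using complex_norm_square[of "cc \<theta> \<phi> m"] cc_norm[of \<theta> \<phi> m] by simp

lemma htil_cc: assumes "\<alpha> \<noteq> 0"
  shows "htil (\<lambda>n. \<alpha> * arr \<phi> n) m * cnj (\<alpha> * arr \<theta> m) = cc \<theta> \<phi> m"
  unfolding htil_def cc_def using assms arr_nz[of \<phi> m] by (simp add: field_simps)

lemma comb_cc: assumes "N > 0" "\<alpha> \<noteq> 0"
  shows "comb N k k' (\<lambda>n. \<alpha> * arr \<phi> n) (\<lambda>n. \<alpha> * arr \<theta> n) =
         (\<Sum>m<N. cc \<theta> \<phi> m * ee N (int m * (int k' + - int k)))"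
  unfolding comb_formula[OF assms(1)] htil_cc[OF assms(2)] by simp

lemma gfun_cc: assumes "N > 0" "\<alpha> \<noteq> 0"
  shows "gfun N k (\<lambda>n. \<alpha> * arr \<phi> n) (\<lambda>n. \<alpha> * arr \<theta> n) = (\<Sum>m<N. cc \<theta> \<phi> m)"
  unfolding gfun_def comb_cc[OF assms] by (simp add: ee_def)

lemma comb_parseval: assumes "N > 0" "\<alpha> \<noteq> 0"
  shows "(\<Sum>k'<N. comb N k k' (\<lambda>n. \<alpha> * arr \<phi> n) (\<lambda>n. \<alpha> * arr \<theta> n) *
             cnj (comb N k k' (\<lambda>n. \<alpha> * arr \<phi> n) (\<lambda>n. \<alpha> * arr \<theta> n))) = of_nat N * of_nat N"
  unfolding comb_cc[OF assms] parseval_gen[OF assms(1)] cc_cnj by simp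

lemma htil_norm: assumes "\<alpha> \<noteq> 0"
  shows "htil (\<lambda>n. \<alpha> * arr \<phi> n) m * cnj (htil (\<lambda>n. \<alpha> * arr \<phi> n) m) = complex_of_real (1 / (cmod \<alpha>)\<^sup>2)"
proof -
  have "htil (\<lambda>n. \<alpha> * arr \<phi> n) m * cnj (htil (\<lambda>n. \<alpha> * arr \<phi> n) m) =
        complex_of_real ((cmod (htil (\<lambda>n. \<alpha> * arr \<phi> n) m))\<^sup>2)"
    by (simp only: complex_norm_square)
  also have "cmod (htil (\<lambda>n. \<alpha> * arr \<phi> n) m) = 1 / cmod \<alpha>"
    unfolding htil_def by (simp add: norm_divide norm_mult arr_norm)
  finally show ?thesis by (simp add: power_divide)
qed

lemma q_parseval: assumes "N > 0" "\<alpha> \<noteq> 0"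
  shows "(\<Sum>n<N. (\<Sum>m<N. htil (\<lambda>n. \<alpha> * arr \<phi> n) m * cnj (Fmat N k m n)) *
             cnj (\<Sum>m<N. htil (\<lambda>n. \<alpha> * arr \<phi> n) m * cnj (Fmat N k m n)))
         = complex_of_real (real N / (cmod \<alpha>)\<^sup>2)"
proof -
  define b where "b m = htil (\<lambda>n. \<alpha> * arr \<phi> n) m / complex_of_real (sqrt (real N))" for m
  have q: "(\<Sum>m<N. htil (\<lambda>n. \<alpha> * arr \<phi> n) m * cnj (Fmat N k m n)) =
           (\<Sum>m<N. b m * ee N (int m * (int n + - int k)))" for n
    unfolding Fmat_ee[OF assms(1)] b_def by (simp add: ee_cnj)
  have "(\<Sum>m<N. b m * cnj (b m)) =
        (\<Sum>m<N. htil (\<lambda>n. \<alpha> * arr \<phi> n) m * cnj (htil (\<lambda>n. \<alpha> * arr \<phi> n) m) /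
               (complex_of_real (sqrt (real N)) * complex_of_real (sqrt (real N))))"
    unfolding b_def by (simp add: mult_ac)
  also have "\<dots> = (\<Sum>m<N. complex_of_real (1 / (cmod \<alpha>)\<^sup>2) / of_nat N)"
    unfolding sqrtN htil_norm[OF assms(2)] ..
  finally have "(\<Sum>m<N. b m * cnj (b m)) = complex_of_real (1 / (cmod \<alpha>)\<^sup>2)"
    using assms(1) by simp
  then show ?thesis
    unfolding q parseval_gen[OF assms(1)] by simp
qed




lemma sum_if_remove: "finite A \<Longrightarrow> (\<Sum>i\<in>A. (if i = k then 0 else f i)) = (\<Sum>i\<in>A - {k}. f i)"
  by (simp add: sum.If_cases Diff_eq)

lemma sinr_eq:
  fixes M :: "'a measure" and N k :: nat and pt \<sigma>2 \<theta> \<phi> :: real and \<alpha> :: complex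
    and s z :: "nat \<Rightarrow> 'a \<Rightarrow> complex"
  assumes N0: "N > 0" and kN: "k < N" and pt: "pt > 0" and \<alpha>: "\<alpha> \<noteq> 0"
    and P: "prob_space M"
    and meas: "\<forall>i<N. s i \<in> borel_measurable M \<and> z i \<in> borel_measurable M"
    and sq: "\<forall>i<N. integrable M (\<lambda>\<omega>. (cmod (s i \<omega>))\<^sup>2) \<and> integrable M (\<lambda>\<omega>. (cmod (z i \<omega>))\<^sup>2)"
    and ss: "\<forall>i<N. \<forall>j<N. (LINT \<omega>|M. s i \<omega> * cnj (s j \<omega>)) = (if i = j then 1 else 0)"
    and z0: "\<forall>i<N. (LINT \<omega>|M. z i \<omega>) = 0"
    and zz: "\<forall>i<N. \<forall>j<N. (LINT \<omega>|M. z i \<omega> * cnj (z j \<omega>)) = (if i = j then complex_of_real \<sigma>2 else 0)"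
    and ind: "prob_space.indep_var M
           (PiM {..<N} (\<lambda>_. borel :: complex measure)) (\<lambda>\<omega>. restrict (\<lambda>i. s i \<omega>) {..<N})
           (PiM {..<N} (\<lambda>_. borel :: complex measure)) (\<lambda>\<omega>. restrict (\<lambda>i. z i \<omega>) {..<N})"
  shows "sinr M N pt k (\<lambda>n. \<alpha> * arr \<phi> n) (\<lambda>n. \<alpha> * arr \<theta> n) s z =
     (pt / real N * (cmod (\<Sum>m<N. cc \<theta> \<phi> m))\<^sup>2) /
     (pt / real N * (real N * real N - (cmod (\<Sum>m<N. cc \<theta> \<phi> m))\<^sup>2) + \<sigma>2 * (real N / (cmod \<alpha>)\<^sup>2))"
proof -
  define h where "h = (\<lambda>n. \<alpha> * arr \<phi> n)"
  define hk where "hk = (\<lambda>n. \<alpha> * arr \<theta> n)"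
  define g where "g = gfun N k h hk"
  define G where "G = (cmod g)\<^sup>2"
  have g_eq: "g = (\<Sum>m<N. cc \<theta> \<phi> m)" unfolding g_def h_def hk_def by (rule gfun_cc[OF N0 \<alpha>])
  have ptN: "(sqrt (pt / real N))\<^sup>2 = pt / real N" using pt N0 by simp
  have ptNc: "complex_of_real (sqrt (pt / real N)) * cnj (complex_of_real (sqrt (pt / real N))) = complex_of_real (pt / real N)"
    unfolding complex_cnj_complex_of_real of_real_mult[symmetric] real_sqrt_mult_self using pt N0 by simp
  have s1: "(LINT \<omega>|M. (cmod (s k \<omega>))\<^sup>2) = 1"
  proof -
    have "complex_of_real (LINT \<omega>|M. (cmod (s k \<omega>))\<^sup>2) = (LINT \<omega>|M. complex_of_real ((cmod (s k \<omega>))\<^sup>2))"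
      by (simp only: integral_complex_of_real)
    also have "\<dots> = (LINT \<omega>|M. s k \<omega> * cnj (s k \<omega>))" by (simp only: complex_norm_square)
    also have "\<dots> = 1" using ss kN by simp
    finally show ?thesis by simp
  qed
  have num: "(LINT \<omega>|M. (cmod (Psig N pt k h hk s \<omega>))\<^sup>2) = pt / real N * G"
  proof -
    have "(cmod (Psig N pt k h hk s \<omega>))\<^sup>2 = (pt / real N * G) * (cmod (s k \<omega>))\<^sup>2" for \<omega>
      unfolding Psig_def G_def g_def[symmetric] using ptN
      by (simp add: norm_mult power_mult_distrib)
    then have "(LINT \<omega>|M. (cmod (Psig N pt k h hk s \<omega>))\<^sup>2) = (LINT \<omega>|M. (pt / real N * G) * (cmod (s k \<omega>))\<^sup>2)"
      by simp
    also have "\<dots> = pt / real N * G" using s1 by simp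
    finally show ?thesis .
  qed
  define W :: "nat + nat \<Rightarrow> 'a \<Rightarrow> complex" where "W = case_sum s z"
  define w where "w = case_sum (\<lambda>i. if i = k then 0 else complex_of_real (sqrt (pt / real N)) * comb N k i h hk)
                               (\<lambda>n. \<Sum>m<N. htil h m * cnj (Fmat N k m n))"
  define J where "J = {..<N} <+> {..<N}"
  have finJ: "finite J" unfolding J_def by simp
  have Iform: "Iint N pt k h hk s z \<omega> = (\<Sum>x\<in>J. w x * W x \<omega>)" for \<omega>
  proof -
    have a: "complex_of_real (sqrt (pt / real N)) * (\<Sum>k'\<in>{..<N} - {k}. s k' \<omega> * vfun N k k' h hk)
        = (\<Sum>i<N. (if i = k then 0 else complex_of_real (sqrt (pt / real N)) * comb N k i h hk) * s i \<omega>)"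
    proof -
      have "(\<Sum>i<N. (if i = k then 0 else complex_of_real (sqrt (pt / real N)) * comb N k i h hk) * s i \<omega>)
          = (\<Sum>i<N. (if i = k then 0 else complex_of_real (sqrt (pt / real N)) * comb N k i h hk * s i \<omega>))"
        by (intro sum.cong refl) simp
      also have "\<dots> = (\<Sum>i\<in>{..<N} - {k}. complex_of_real (sqrt (pt / real N)) * comb N k i h hk * s i \<omega>)"
        by (rule sum_if_remove) simp
      also have "\<dots> = complex_of_real (sqrt (pt / real N)) * (\<Sum>k'\<in>{..<N} - {k}. s k' \<omega> * vfun N k k' h hk)"
        unfolding vfun_def sum_distrib_left by (simp add: mult_ac)
      finally show ?thesis by simp
    qed
    have b: "(\<Sum>m<N. htil h m * (\<Sum>n<N. cnj (Fmat N k m n) * z n \<omega>))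
        = (\<Sum>n<N. (\<Sum>m<N. htil h m * cnj (Fmat N k m n)) * z n \<omega>)"
      by (simp add: sum_distrib_left sum_distrib_right mult_ac) (rule sum.swap)
    show ?thesis unfolding Iint_def J_def sum.Plus[OF finite_lessThan finite_lessThan] a b
      by (simp add: w_def W_def)
  qed
  have Wm: "W x \<in> borel_measurable M" "integrable M (\<lambda>\<omega>. (cmod (W x \<omega>))\<^sup>2)" if "x \<in> J" for x
    using that meas sq unfolding J_def W_def by auto
  define d :: "nat + nat \<Rightarrow> complex" where "d = case_sum (\<lambda>_. 1::complex) (\<lambda>_. complex_of_real \<sigma>2)"
  have cov: "(LINT \<omega>|M. W x \<omega> * cnj (W y \<omega>)) = (if x = y then d x else 0)" if "x \<in> J" "y \<in> J" for x y
  proof -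
    from that obtain a b where "x = Inl a \<and> a < N \<or> x = Inr a \<and> a < N" "y = Inl b \<and> b < N \<or> y = Inr b \<and> b < N"
      unfolding J_def by auto
    then consider "x = Inl a" "y = Inl b" "a < N" "b < N" | "x = Inl a" "y = Inr b" "a < N" "b < N"
      | "x = Inr a" "y = Inl b" "a < N" "b < N" | "x = Inr a" "y = Inr b" "a < N" "b < N" by blast
    then show ?thesis
    proof cases
      case 1 then show ?thesis using ss by (simp add: W_def d_def)
    next
      case 2 then show ?thesis using indep_cross[OF P _ _ meas sq z0 ind, of a b] by (simp add: W_def)
    next
      case 3
      have "(LINT \<omega>|M. z a \<omega> * cnj (s b \<omega>)) = cnj (LINT \<omega>|M. s b \<omega> * cnj (z a \<omega>))"
        by (subst Bochner_Integration.integral_cnj[symmetric]) (simp add: mult.commute)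
      then show ?thesis using 3 indep_cross[OF P _ _ meas sq z0 ind, of b a] by (simp add: W_def)
    next
      case 4 then show ?thesis using zz by (simp add: W_def d_def)
    qed
  qed
  have "complex_of_real (LINT \<omega>|M. (cmod (Iint N pt k h hk s z \<omega>))\<^sup>2)
      = complex_of_real (LINT \<omega>|M. (cmod (\<Sum>x\<in>J. w x * W x \<omega>))\<^sup>2)" unfolding Iform ..
  also have "\<dots> = (\<Sum>x\<in>J. \<Sum>y\<in>J. w x * cnj (w y) * (LINT \<omega>|M. W x \<omega> * cnj (W y \<omega>)))"
    by (rule quad_int[OF finJ Wm])
  also have "\<dots> = (\<Sum>x\<in>J. \<Sum>y\<in>J. if x = y then w x * cnj (w y) * d y else 0)"
    by (intro sum.cong refl) (simp add: cov)
  also have "\<dots> = (\<Sum>x\<in>J. w x * cnj (w x) * d x)"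
    by (intro sum.cong refl) (simp add: sum.delta' finJ)
  also have "\<dots> = (\<Sum>i<N. if i = k then 0 else complex_of_real (pt / real N) * (comb N k i h hk * cnj (comb N k i h hk)))
      + complex_of_real \<sigma>2 * (\<Sum>n<N. (\<Sum>m<N. htil h m * cnj (Fmat N k m n)) * cnj (\<Sum>m<N. htil h m * cnj (Fmat N k m n)))"
  proof -
    have l: "w (Inl i) * cnj (w (Inl i)) * d (Inl i) = (if i = k then 0 else complex_of_real (pt / real N) * (comb N k i h hk * cnj (comb N k i h hk)))" for i
    proof (cases "i = k")
      case True then show ?thesis by (simp add: w_def)
    next
      case False
      have "w (Inl i) * cnj (w (Inl i)) * d (Inl i) =
        (complex_of_real (sqrt (pt / real N)) * cnj (complex_of_real (sqrt (pt / real N)))) * (comb N k i h hk * cnj (comb N k i h hk))"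
        using False by (simp add: w_def d_def mult_ac del: complex_cnj_complex_of_real)
      then show ?thesis unfolding ptNc using False by simp
    qed
    have r: "w (Inr n) * cnj (w (Inr n)) * d (Inr n) = complex_of_real \<sigma>2 * ((\<Sum>m<N. htil h m * cnj (Fmat N k m n)) * cnj (\<Sum>m<N. htil h m * cnj (Fmat N k m n)))" for n
      by (simp add: w_def d_def mult_ac)
    show ?thesis
      unfolding J_def sum.Plus[OF finite_lessThan finite_lessThan] comp_def l r sum_distrib_left ..
  qed
  finally have den0: "complex_of_real (LINT \<omega>|M. (cmod (Iint N pt k h hk s z \<omega>))\<^sup>2) =
      (\<Sum>i<N. if i = k then 0 else complex_of_real (pt / real N) * (comb N k i h hk * cnj (comb N k i h hk)))
      + complex_of_real \<sigma>2 * (\<Sum>n<N. (\<Sum>m<N. htil h m * cnj (Fmat N k m n)) * cnj (\<Sum>m<N. htil h m * cnj (Fmat N k m n)))" .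
  have A_eq: "(\<Sum>i<N. if i = k then 0 else complex_of_real (pt / real N) * (comb N k i h hk * cnj (comb N k i h hk)))
      = complex_of_real (pt / real N) * (of_nat N * of_nat N - g * cnj g)"
  proof -
    have "(\<Sum>i<N. complex_of_real (pt / real N) * (comb N k i h hk * cnj (comb N k i h hk)))
        = (\<Sum>i<N. if i = k then complex_of_real (pt / real N) * (comb N k i h hk * cnj (comb N k i h hk)) else 0)
          + (\<Sum>i<N. if i = k then 0 else complex_of_real (pt / real N) * (comb N k i h hk * cnj (comb N k i h hk)))"
      by (subst sum.distrib[symmetric]) (intro sum.cong refl, simp)
    moreover have "(\<Sum>i<N. complex_of_real (pt / real N) * (comb N k i h hk * cnj (comb N k i h hk)))
        = complex_of_real (pt / real N) * (of_nat N * of_nat N)"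
      unfolding sum_distrib_left[symmetric] h_def hk_def comb_parseval[OF N0 \<alpha>] ..
    moreover have "(\<Sum>i<N. if i = k then complex_of_real (pt / real N) * (comb N k i h hk * cnj (comb N k i h hk)) else 0)
        = complex_of_real (pt / real N) * (g * cnj g)"
      using kN by (simp add: g_def gfun_def)
    ultimately show ?thesis by (simp add: algebra_simps)
  qed
  have B_eq: "(\<Sum>n<N. (\<Sum>m<N. htil h m * cnj (Fmat N k m n)) * cnj (\<Sum>m<N. htil h m * cnj (Fmat N k m n)))
      = complex_of_real (real N / (cmod \<alpha>)\<^sup>2)"
    unfolding h_def by (rule q_parseval[OF N0 \<alpha>])
  have gG: "g * cnj g = complex_of_real G" unfolding G_def by (simp only: complex_norm_square)
  have den: "complex_of_real (LINT \<omega>|M. (cmod (Iint N pt k h hk s z \<omega>))\<^sup>2)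
     = complex_of_real (pt / real N * (real N * real N - G) + \<sigma>2 * (real N / (cmod \<alpha>)\<^sup>2))"
    unfolding den0 A_eq B_eq gG by simp
  then have den': "(LINT \<omega>|M. (cmod (Iint N pt k h hk s z \<omega>))\<^sup>2)
     = pt / real N * (real N * real N - G) + \<sigma>2 * (real N / (cmod \<alpha>)\<^sup>2)"
    using of_real_eq_iff by blast
  show ?thesis
    unfolding sinr_def h_def[symmetric] hk_def[symmetric] num den' G_def g_eq ..
qed


lemma all_equal:
  fixes c :: "nat \<Rightarrow> complex"
  assumes n1: "\<And>m. m < N \<Longrightarrow> cmod (c m) = 1"
    and S: "(cmod (\<Sum>m<N. c m))\<^sup>2 = real N * real N"
  shows "\<And>m l. m < N \<Longrightarrow> l < N \<Longrightarrow> c m = c l"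
proof -
  define T where "T = (\<Sum>m<N. c m)"
  have cc1: "c m * cnj (c m) = 1" if "m < N" for m
    using complex_norm_square[of "c m"] n1[OF that] by simp
  have pt: "(c m - c l) * cnj (c m - c l) = 2 - c m * cnj (c l) - c l * cnj (c m)" if "m < N" "l < N" for m l
  proof -
    have "(c m - c l) * cnj (c m - c l) = c m * cnj (c m) + c l * cnj (c l) - c m * cnj (c l) - c l * cnj (c m)"
      by (simp add: algebra_simps)
    then show ?thesis using cc1 that by simp
  qed
  have s1: "(\<Sum>m<N. \<Sum>l<N. c m * cnj (c l)) = T * cnj T"
    unfolding T_def cnj_sum sum_product ..
  have s2: "(\<Sum>m<N. \<Sum>l<N. c l * cnj (c m)) = T * cnj T"
    unfolding T_def cnj_sum sum_product by (rule sum.swap)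
  have TT: "T * cnj T = of_nat N * of_nat N"
  proof -
    have "T * cnj T = complex_of_real ((cmod T)\<^sup>2)" by (simp only: complex_norm_square)
    also have "(cmod T)\<^sup>2 = real N * real N" using S unfolding T_def .
    finally show ?thesis by simp
  qed
  have "(\<Sum>m<N. \<Sum>l<N. (c m - c l) * cnj (c m - c l)) = (\<Sum>m<N. \<Sum>l<N. 2 - c m * cnj (c l) - c l * cnj (c m))"
    by (intro sum.cong refl pt) auto
  also have "\<dots> = (\<Sum>m<N. \<Sum>l<N. (2::complex)) - (\<Sum>m<N. \<Sum>l<N. c m * cnj (c l)) - (\<Sum>m<N. \<Sum>l<N. c l * cnj (c m))"
    by (simp add: sum_subtractf)
  also have "\<dots> = 0"
  proof -
    have c2: "(\<Sum>m<N. \<Sum>l<N. (2::complex)) = 2 * (of_nat N * of_nat N)" by simp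
    have gen: "\<And>X::complex. 2 * X - X - X = 0" by (simp only: mult_2 add_diff_cancel_right' diff_self)
    show ?thesis unfolding s1 s2 TT c2 by (rule gen)
  qed
  finally have z: "(\<Sum>m<N. \<Sum>l<N. (c m - c l) * cnj (c m - c l)) = 0" .
  have "complex_of_real (\<Sum>m<N. \<Sum>l<N. (cmod (c m - c l))\<^sup>2) = (\<Sum>m<N. \<Sum>l<N. (c m - c l) * cnj (c m - c l))"
    by (simp only: of_real_sum complex_norm_square)
  then have "complex_of_real (\<Sum>m<N. \<Sum>l<N. (cmod (c m - c l))\<^sup>2) = 0" unfolding z .
  then have zr: "(\<Sum>m<N. \<Sum>l<N. (cmod (c m - c l))\<^sup>2) = 0" by (rule of_real_eq_0_iff[THEN iffD1])
  fix m l assume ml: "m < N" "l < N"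
  have nn: "0 \<le> (\<Sum>l<N. (cmod (c m' - c l))\<^sup>2)" if "m' \<in> {..<N}" for m'
    by (intro sum_nonneg) simp
  have "\<forall>m'\<in>{..<N}. (\<Sum>l<N. (cmod (c m' - c l))\<^sup>2) = 0"
    by (rule iffD1[OF sum_nonneg_eq_0_iff[OF finite_lessThan nn] zr])
  then have i0: "(\<Sum>l<N. (cmod (c m - c l))\<^sup>2) = 0" using ml by blast
  have nn2: "0 \<le> (cmod (c m - c l'))\<^sup>2" if "l' \<in> {..<N}" for l'
    by simp
  have "\<forall>l'\<in>{..<N}. (cmod (c m - c l'))\<^sup>2 = 0"
    by (rule iffD1[OF sum_nonneg_eq_0_iff[OF finite_lessThan nn2] i0])
  then have "(cmod (c m - c l))\<^sup>2 = 0" using ml by blast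
  then show "c m = c l" by simp
qed

lemma frac_le_cross: "(0::real) < y \<Longrightarrow> 0 < v \<Longrightarrow> x * v \<le> u * y \<Longrightarrow> x / y \<le> u / v"
  by (simp add: field_simps)

lemma frac_le_cross2: "(0::real) < y \<Longrightarrow> 0 < v \<Longrightarrow> x / y \<le> u / v \<Longrightarrow> x * v \<le> u * y"
  by (simp add: field_simps)




theorem lemma3:
  fixes M :: "'a measure" and N k :: nat and pt \<sigma>2 \<theta> :: real and \<alpha> :: complex
    and s z :: "nat \<Rightarrow> 'a \<Rightarrow> complex"
  assumes "N \<ge> 2" and "k < N" and "pt > 0" and "\<sigma>2 > 0"
    and "\<alpha> \<noteq> 0" and "\<theta> \<in> {0..<2 * pi}"
    and "prob_space M"
    and "\<forall>i<N. s i \<in> borel_measurable M \<and> z i \<in> borel_measurable M"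
    and "\<forall>i<N. integrable M (\<lambda>\<omega>. (cmod (s i \<omega>))\<^sup>2) \<and> integrable M (\<lambda>\<omega>. (cmod (z i \<omega>))\<^sup>2)"
    and "\<forall>i<N. \<forall>j<N. (LINT \<omega>|M. s i \<omega> * cnj (s j \<omega>)) = (if i = j then 1 else 0)"
    and "\<forall>i<N. (LINT \<omega>|M. z i \<omega>) = 0"
    and "\<forall>i<N. \<forall>j<N. (LINT \<omega>|M. z i \<omega> * cnj (z j \<omega>)) = (if i = j then complex_of_real \<sigma>2 else 0)"
    and "prob_space.indep_var M
           (PiM {..<N} (\<lambda>_. borel :: complex measure)) (\<lambda>\<omega>. restrict (\<lambda>i. s i \<omega>) {..<N})
           (PiM {..<N} (\<lambda>_. borel :: complex measure)) (\<lambda>\<omega>. restrict (\<lambda>i. z i \<omega>) {..<N})"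
  shows "(\<exists>\<phi>\<in>{-pi..<pi}. \<forall>\<psi>\<in>{-pi..<pi}.
            sinr M N pt k (\<lambda>n. \<alpha> * arr \<psi> n) (\<lambda>n. \<alpha> * arr \<theta> n) s z
            \<le> sinr M N pt k (\<lambda>n. \<alpha> * arr \<phi> n) (\<lambda>n. \<alpha> * arr \<theta> n) s z)
       \<and> (\<forall>\<phi>\<in>{-pi..<pi}.
            (\<forall>\<psi>\<in>{-pi..<pi}.
               sinr M N pt k (\<lambda>n. \<alpha> * arr \<psi> n) (\<lambda>n. \<alpha> * arr \<theta> n) s z
               \<le> sinr M N pt k (\<lambda>n. \<alpha> * arr \<phi> n) (\<lambda>n. \<alpha> * arr \<theta> n) s z)
            \<longrightarrow> (\<forall>n<N. arr \<phi> n = arr \<theta> n))"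
proof -
  have N0: "N > 0" using assms(1) by simp
  define G where "G \<phi> = (cmod (\<Sum>m<N. cc \<theta> \<phi> m))\<^sup>2" for \<phi>
  define a where "a = pt / real N"
  define b where "b = \<sigma>2 * (real N / (cmod \<alpha>)\<^sup>2)"
  define NN where "NN = real N * real N"
  have a0: "a > 0" unfolding a_def using assms(3) N0 by simp
  have b0: "b > 0" unfolding b_def using assms(4,5) N0 by simp
  have S: "sinr M N pt k (\<lambda>n. \<alpha> * arr \<phi> n) (\<lambda>n. \<alpha> * arr \<theta> n) s z = a * G \<phi> / (a * (NN - G \<phi>) + b)" for \<phi>
    unfolding G_def a_def b_def NN_def
    by (rule sinr_eq[OF N0 assms(2) assms(3) assms(5) assms(7) assms(8) assms(9) assms(10) assms(11) assms(12) assms(13)])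
  have Gle: "G \<phi> \<le> NN" for \<phi>
  proof -
    have "cmod (\<Sum>m<N. cc \<theta> \<phi> m) \<le> (\<Sum>m<N. cmod (cc \<theta> \<phi> m))" by (rule norm_sum)
    also have "\<dots> = real N" by (simp add: cc_norm)
    finally have "cmod (\<Sum>m<N. cc \<theta> \<phi> m) \<le> real N" .
    then have "(cmod (\<Sum>m<N. cc \<theta> \<phi> m))\<^sup>2 \<le> (real N)\<^sup>2" by (intro power_mono) auto
    then show ?thesis unfolding G_def NN_def by (simp add: power2_eq_square)
  qed
  define \<phi>0 where "\<phi>0 = (if \<theta> < pi then \<theta> else \<theta> - 2 * pi)"
  have \<phi>0_in: "\<phi>0 \<in> {-pi..<pi}" using assms(6) pi_gt_zero unfolding \<phi>0_def by auto
  have arr0: "arr \<phi>0 n = arr \<theta> n" for n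
  proof -
    have "sin \<phi>0 = sin \<theta>" unfolding \<phi>0_def by (simp add: sin_diff)
    then show ?thesis unfolding arr_def by simp
  qed
  have Gmax: "G \<phi>0 = NN"
  proof -
    have "cc \<theta> \<phi>0 m = 1" for m unfolding cc_def arr0 using arr_nz[of \<theta> m] by simp
    then show ?thesis unfolding G_def NN_def by (simp add: power2_eq_square)
  qed
  have D0: "0 < a * (NN - G \<phi>) + b" for \<phi> using Gle[of \<phi>] a0 b0
    by (metis add_pos_nonneg diff_ge_0_iff_ge mult_nonneg_nonneg less_le add.commute)
  have up: "a * G \<psi> / (a * (NN - G \<psi>) + b) \<le> a * G \<phi>0 / (a * (NN - G \<phi>0) + b)" for \<psi>
  proof (rule frac_le_cross[OF D0 D0])
    have e: "a * NN * (a * (NN - G \<psi>) + b) - a * G \<psi> * b = a * (NN - G \<psi>) * (a * NN + b)"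
      by (simp add: algebra_simps)
    have "0 \<le> a * (NN - G \<psi>) * (a * NN + b)"
      using a0 b0 Gle[of \<psi>] by (intro mult_nonneg_nonneg) (auto simp: NN_def)
    then show "a * G \<psi> * (a * (NN - G \<phi>0) + b) \<le> a * G \<phi>0 * (a * (NN - G \<psi>) + b)"
      using e unfolding Gmax by simp
  qed
  have down: "NN \<le> G \<phi>" if "a * G \<phi>0 / (a * (NN - G \<phi>0) + b) \<le> a * G \<phi> / (a * (NN - G \<phi>) + b)" for \<phi>
  proof -
    have c: "a * G \<phi>0 * (a * (NN - G \<phi>) + b) \<le> a * G \<phi> * (a * (NN - G \<phi>0) + b)"
      by (rule frac_le_cross2[OF D0 D0 that])
    have e: "a * NN * (a * (NN - G \<phi>) + b) - a * G \<phi> * b = a * (NN - G \<phi>) * (a * NN + b)"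
      by (simp add: algebra_simps)
    have "a * (NN - G \<phi>) * (a * NN + b) \<le> 0" using c e unfolding Gmax by simp
    moreover have "0 < a * (a * NN + b)"
    proof -
      have "0 \<le> a * NN" using a0 unfolding NN_def by simp
      then have "0 < a * NN + b" using b0 by linarith
      then show ?thesis using a0 by simp
    qed
    ultimately have "NN - G \<phi> \<le> 0"
      by (metis (no_types, opaque_lifting) mult.assoc mult.commute mult_le_0_iff not_le)
    then show ?thesis by simp
  qed
  show ?thesis
  proof
    show "\<exists>\<phi>\<in>{-pi..<pi}. \<forall>\<psi>\<in>{-pi..<pi}.
            sinr M N pt k (\<lambda>n. \<alpha> * arr \<psi> n) (\<lambda>n. \<alpha> * arr \<theta> n) s z
            \<le> sinr M N pt k (\<lambda>n. \<alpha> * arr \<phi> n) (\<lambda>n. \<alpha> * arr \<theta> n) s z"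
      using \<phi>0_in up unfolding S by blast
  next
    show "\<forall>\<phi>\<in>{-pi..<pi}.
            (\<forall>\<psi>\<in>{-pi..<pi}.
               sinr M N pt k (\<lambda>n. \<alpha> * arr \<psi> n) (\<lambda>n. \<alpha> * arr \<theta> n) s z
               \<le> sinr M N pt k (\<lambda>n. \<alpha> * arr \<phi> n) (\<lambda>n. \<alpha> * arr \<theta> n) s z)
            \<longrightarrow> (\<forall>n<N. arr \<phi> n = arr \<theta> n)"
    proof (intro ballI impI allI)
      fix \<phi> n
      assume "\<phi> \<in> {-pi..<pi}"
        and H: "\<forall>\<psi>\<in>{-pi..<pi}. sinr M N pt k (\<lambda>n. \<alpha> * arr \<psi> n) (\<lambda>n. \<alpha> * arr \<theta> n) s z
               \<le> sinr M N pt k (\<lambda>n. \<alpha> * arr \<phi> n) (\<lambda>n. \<alpha> * arr \<theta> n) s z"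
        and nN: "n < N"
      have "a * G \<phi>0 / (a * (NN - G \<phi>0) + b) \<le> a * G \<phi> / (a * (NN - G \<phi>) + b)"
        using H \<phi>0_in unfolding S by blast
      then have "NN \<le> G \<phi>" by (rule down)
      then have GN: "G \<phi> = NN" using Gle[of \<phi>] by simp
      have eq: "cc \<theta> \<phi> m = cc \<theta> \<phi> l" if "m < N" "l < N" for m l
        by (rule all_equal[of N "cc \<theta> \<phi>"]) (use cc_norm GN that in \<open>auto simp: G_def NN_def\<close>)
      have "cc \<theta> \<phi> 0 = 1" unfolding cc_def arr_def by simp
      then have "cc \<theta> \<phi> n = 1" using eq[OF nN N0] by simp
      then have "cnj (arr \<theta> n) = cnj (arr \<phi> n)" unfolding cc_def using arr_nz[of \<phi> n] by (simp add: divide_eq_1_iff)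
      then show "arr \<phi> n = arr \<theta> n" by simp
    qed
  qed
qed


end
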